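(* Let $\mathcal{H}=([n],E=\{e_1,\dots,e_m\})$ be a 3-uniform hypergraph with $n$ vertices and $m=cn$ hyperedges. Suppose $\mathcal{H}$ is $(\epsilon,100c)$-degree bounded and $(\beta,\gamma)$-asymmetric, where $\gamma\ge 200\epsilon$. Let $\mathcal{C}=\{C_1,\dots,C_m\}$ be an arbitrary 3XOR instance with $n$ variables and $m$ constraints based on $\mathcal{H}$ (i.e. $e_i$ is the set of indices of the three variables used by $C_i$). Set $\delta=\min\{\frac{1}{200},\frac{\gamma}{48},\frac{\epsilon}{95c}\}$. If $\mathrm{GI}(G_{\mathcal{C}},G_{\mathcal{C}^0})\ge 1-\delta$, then $\mathrm{val}(\mathcal{C})\ge 0.9-100(\epsilon+\beta)$.
   Context: A hypergraph is $(\epsilon,D)$-degree bounded if every set of an $\epsilon$ fraction of its vertices has average degree at most $D$ (degree = number of hyperedges containing the vertex). For a hypergraph $\mathcal{H}=(V,E)$ and a permutation $\pi$ of $V$, $\mathrm{AUT}(\mathcal{H};\pi)=|\{e\in E:\pi(e)\in E\}|/|E|$; $\mathcal{H}$ is $(\beta,\gamma)$-asymmetric if every permutation with at most a $(1-\beta)$ fraction of the vertices as fixed points has $\mathrm{AUT}(\mathcal{H};\pi)<1-\gamma$. 3XOR instance: equations $x_{j_1}+x_{j_2}+x_{j_3}=b$ over $\mathbb{Z}_2$; $\mathrm{val}(\mathcal{C})$ is the maximum fraction of equations satisfiable by an assignment; $\mathcal{C}^0$ sets all right-hand sides to $0$. Graph $G_{\mathcal{C}}$: for each variable $x$, two variable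 vertices $x\mapsto0,x\mapsto1$ joined by an edge; for each equation $C$ on $x_1,x_2,x_3$, four constraint vertices, one per satisfying assignment $(x_1\mapsto a_1,x_2\mapsto a_2,x_3\mapsto a_3)$, forming a clique, each adjacent to the variable vertices $x_i\mapsto a_i$; variable vertices shared, constraint vertices not. $\mathrm{GI}(G,H)=\max_\pi\frac{|\{e\in E(G):\pi(e)\in E(H)\}|}{\max\{|E(G)|,|E(H)|\}}$ over bijections $\pi$. *)

theory Defs
  imports Complex_Main "HOL-Library.FuncSet" "HOL-Combinatorics.Permutations"
begin

definition hdeg :: "nat set set \<Rightarrow> nat \<Rightarrow> nat" where
  "hdeg E v = card {ed \<in> E. v \<in> ed}"

text \<open>(eps,D)-degree bounded: every set of (at most) an eps fraction of the vertices
  has total degree at most D times eps|V| (i.e. average degree at most D once padded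
  to exactly an eps fraction).\<close>
definition degree_bounded :: "nat set \<Rightarrow> nat set set \<Rightarrow> real \<Rightarrow> real \<Rightarrow> bool" where
  "degree_bounded V E eps D \<longleftrightarrow>
     (\<forall>S \<subseteq> V. real (card S) \<le> eps * real (card V) \<longrightarrow>
        (\<Sum>v\<in>S. real (hdeg E v)) \<le> D * (eps * real (card V)))"

definition AUT :: "nat set set \<Rightarrow> (nat \<Rightarrow> nat) \<Rightarrow> real" where
  "AUT E \<pi> = real (card {ed \<in> E. \<pi> ` ed \<in> E}) / real (card E)"

definition asymmetric :: "nat set \<Rightarrow> nat set set \<Rightarrow> real \<Rightarrow> real \<Rightarrow> bool" where
  "asymmetric V E \<beta> \<gamma> \<longleftrightarrow>
     (\<forall>\<pi>. \<pi> permutes V \<and> real (card {x \<in> V. \<pi> x = x}) \<le> (1 - \<beta>) * real (card V)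
        \<longrightarrow> AUT E \<pi> < 1 - \<gamma>)"

text \<open>Constraint i is the equation  sum_{j in e i} x_j = b i  over Z_2,
  with booleans encoding Z_2 (True = 1).\<close>
definition xor_sat :: "(nat \<Rightarrow> nat set) \<Rightarrow> (nat \<Rightarrow> bool) \<Rightarrow> (nat \<Rightarrow> bool) \<Rightarrow> nat \<Rightarrow> bool" where
  "xor_sat e b a i \<longleftrightarrow> (odd (card {j \<in> e i. a j}) \<longleftrightarrow> b i)"

definition xor_val :: "nat \<Rightarrow> nat \<Rightarrow> (nat \<Rightarrow> nat set) \<Rightarrow> (nat \<Rightarrow> bool) \<Rightarrow> real" where
  "xor_val n m e b =
     Max ((\<lambda>a. real (card {i \<in> {..<m}. xor_sat e b a i}) / real m) ` ({..<n} \<rightarrow>\<^sub>E (UNIV :: bool set)))"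

text \<open>VarV x v is the variable vertex (x |-> v); ConV i T is the constraint vertex of
  constraint i for the local assignment setting exactly the variables in T (a subset of e i) to 1.\<close>
datatype vtx = VarV nat bool | ConV nat "nat set"

definition local_sat :: "(nat \<Rightarrow> nat set) \<Rightarrow> (nat \<Rightarrow> bool) \<Rightarrow> nat \<Rightarrow> nat set \<Rightarrow> bool" where
  "local_sat e b i T \<longleftrightarrow> T \<subseteq> e i \<and> (odd (card T) \<longleftrightarrow> b i)"

definition GC_V :: "nat \<Rightarrow> nat \<Rightarrow> (nat \<Rightarrow> nat set) \<Rightarrow> (nat \<Rightarrow> bool) \<Rightarrow> vtx set" where
  "GC_V n m e b = {VarV x v | x v. x < n} \<union> {ConV i T | i T. i < m \<and> local_sat e b i T}"

definition GC_E :: "nat \<Rightarrow> nat \<Rightarrow> (nat \<Rightarrow> nat set) \<Rightarrow> (nat \<Rightarrow> bool) \<Rightarrow> vtx set set" where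
  "GC_E n m e b =
     {{VarV x False, VarV x True} | x. x < n}
   \<union> {{ConV i T, ConV i T'} | i T T'. i < m \<and> local_sat e b i T \<and> local_sat e b i T' \<and> T \<noteq> T'}
   \<union> {{ConV i T, VarV j (j \<in> T)} | i T j. i < m \<and> local_sat e b i T \<and> j \<in> e i}"

definition GI :: "vtx set \<Rightarrow> vtx set set \<Rightarrow> vtx set \<Rightarrow> vtx set set \<Rightarrow> real" where
  "GI V1 E1 V2 E2 =
     Max ((\<lambda>\<pi>. real (card {ed \<in> E1. \<pi> ` ed \<in> E2}) / real (max (card E1) (card E2)))
          ` {\<pi> \<in> V1 \<rightarrow>\<^sub>E V2. bij_betw \<pi> V1 V2})"

end

theory Submission
  imports Defs "HOL-Combinatorics.Cycles"
begin


definition Sset :: "nat set \<Rightarrow> bool \<Rightarrow> nat set set" where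
  "Sset E p = {T. T \<subseteq> E \<and> (odd (card T) \<longleftrightarrow> p)}"

lemma Sset_enum:
  assumes "x \<noteq> y" "y \<noteq> z" "x \<noteq> z"
  shows "Sset {x,y,z} p = (if p then {{x},{y},{z},{x,y,z}} else {{},{x,y},{x,z},{y,z}})"
proof -
  have P: "Pow {x,y,z} = {{},{x},{y},{z},{x,y},{x,z},{y,z},{x,y,z}}"
    by (auto simp: Pow_insert)
  have "Sset {x,y,z} p = {T \<in> Pow {x,y,z}. odd (card T) \<longleftrightarrow> p}"
    unfolding Sset_def by auto
  also have "\<dots> = (if p then {{x},{y},{z},{x,y,z}} else {{},{x,y},{x,z},{y,z}})"
    unfolding P using assms by auto
  finally show ?thesis .
qed

lemma Sset_card: assumes "card E = 3" shows "card (Sset E p) = 4"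
proof -
  obtain x y z where E: "E = {x,y,z}" "x \<noteq> y" "y \<noteq> z" "x \<noteq> z"
    using assms card_3_iff by metis
  show ?thesis unfolding E(1) Sset_enum[OF E(2-4)] using E(2-4)
    by (auto simp: doubleton_eq_iff insert_commute)
qed

lemma Sset_fin: "finite E \<Longrightarrow> finite (Sset E p)"
  unfolding Sset_def by (rule finite_subset[of _ "Pow E"]) auto


lemma card3_first: assumes "card E = 3" "j \<in> E"
  obtains y z where "E = {j,y,z}" "j \<noteq> y" "y \<noteq> z" "j \<noteq> z"
proof -
  have "card (E - {j}) = 2" using assms by (simp add: card_Diff_singleton)
  then obtain y z where "E - {j} = {y,z}" "y \<noteq> z" by (auto simp: card_2_iff)
  then have "E = {j,y,z}" "j \<noteq> y" "j \<noteq> z" using assms(2) by auto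
  then show ?thesis using that \<open>y \<noteq> z\<close> by blast
qed

lemma Sset_N: assumes "card E = 3" "j \<in> E" shows "card {T \<in> Sset E p. (j\<in>T) = v} = 2"
proof -
  obtain y z where E: "E = {j,y,z}" "j \<noteq> y" "y \<noteq> z" "j \<noteq> z"
    using card3_first[OF assms] by blast
  have "{T \<in> Sset E p. (j\<in>T) = v} = (if p then (if v then {{j},{j,y,z}} else {{y},{z}})
         else (if v then {{j,y},{j,z}} else {{},{y,z}}))"
    unfolding E(1) Sset_enum[OF E(2-4)] using E(2-4) by auto
  then show ?thesis using E(2-4) by (auto simp: doubleton_eq_iff)
qed


lemma Sset_M: assumes "card E = 3" "s \<in> E" "s' \<in> E"
  and eq: "{T\<in>Sset E False. (s\<in>T)=t} = {T\<in>Sset E False. (s'\<in>T)=t'}"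
  shows "s = s' \<and> t = t'"
proof (cases "s = s'")
  case True
  show ?thesis
  proof (rule ccontr)
    assume "\<not> ?thesis"
    then have "t' = (\<not> t)" using True by auto
    then have "{T\<in>Sset E False. (s\<in>T)=t} = {}" using eq True by auto
    then show False using Sset_N[OF assms(1,2), of False t] by (simp del: Collect_empty_eq)
  qed
next
  case False
  have "s' \<in> E - {s}" using False assms by auto
  obtain y z where E: "E = {s,y,z}" "s \<noteq> y" "y \<noteq> z" "s \<noteq> z"
    using card3_first[OF assms(1,2)] by blast
  have "s' = y \<or> s' = z" using False assms(3) E by auto
  then obtain z' where E': "E = {s,s',z'}" "s \<noteq> s'" "s' \<noteq> z'" "s \<noteq> z'"
    using E by (metis insert_commute)
  have A: "{T\<in>Sset E False. (s\<in>T)=t} = (if t then {{s,s'},{s,z'}} else {{},{s',z'}})"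
    unfolding E'(1) Sset_enum[OF E'(2-4)] using E'(2-4) by auto
  have B: "{T\<in>Sset E False. (s'\<in>T)=t'} = (if t' then {{s,s'},{s',z'}} else {{},{s,z'}})"
    unfolding E'(1) Sset_enum[OF E'(2-4)] using E'(2-4) by auto
  show ?thesis using eq unfolding A B using E'(2-4)
    by (cases t; cases t'; auto simp: doubleton_eq_iff)
qed


lemma local_sat_Sset: "local_sat e b i T \<longleftrightarrow> T \<in> Sset (e i) (b i)"
  unfolding local_sat_def Sset_def by auto

lemma adjV: assumes "{VarV x v, q} \<in> GC_E n m e b"
  shows "q = VarV x (\<not> v) \<or> (\<exists>k T. q = ConV k T \<and> k < m \<and> local_sat e b k T \<and> x \<in> e k \<and> v = (x \<in> T))"
  using assms unfolding GC_E_def Un_iff mem_Collect_eq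
  apply (elim disjE exE conjE)
    apply (simp add: doubleton_eq_iff; blast)
   apply (simp add: doubleton_eq_iff)
  apply (simp add: doubleton_eq_iff; blast)
  done

lemma adjC: assumes "{ConV k T, q} \<in> GC_E n m e b"
  shows "k < m \<and> local_sat e b k T \<and> ((\<exists>T'. q = ConV k T' \<and> local_sat e b k T' \<and> T' \<noteq> T) \<or> (\<exists>x. q = VarV x (x \<in> T) \<and> x \<in> e k))"
  using assms unfolding GC_E_def by (auto simp: doubleton_eq_iff)

lemma edge_con_same: assumes "ed \<in> GC_E n m e b" "ConV i T \<in> ed" "ConV i' T' \<in> ed"
  shows "i = i'"
  using assms unfolding GC_E_def Un_iff mem_Collect_eq
  by (elim disjE exE conjE; simp; blast)

lemma parity_lemma: assumes "finite E" "T \<subseteq> E"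
  shows "odd (card {j\<in>E. (j\<in>T) \<noteq> a j}) \<longleftrightarrow> (odd (card T) \<noteq> odd (card {j\<in>E. a j}))"
proof -
  define A where "A = {j\<in>E. a j}"
  have fA: "finite A" "finite T" using assms A_def finite_subset by auto
  have 1: "{j\<in>E. (j\<in>T) \<noteq> a j} = (T - A) \<union> (A - T)" using assms(2) unfolding A_def by auto
  have 2: "card ((T - A) \<union> (A - T)) = card (T - A) + card (A - T)"
    by (rule card_Un_disjoint) (use fA in auto)
  have 3: "card T = card (T - A) + card (T \<inter> A)"
    using card_Int_Diff[OF fA(2), of A] by simp
  have 4: "card A = card (A - T) + card (T \<inter> A)"
    using card_Int_Diff[OF fA(1), of T] by (simp add: Int_commute)
  show ?thesis unfolding 1 2 A_def[symmetric] using 3 4 by presburger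
qed


lemma VarV_in_V: "x < n \<Longrightarrow> VarV x v \<in> GC_V n m e b"
  unfolding GC_V_def by auto

lemma ConV_in_V: "i < m \<Longrightarrow> local_sat e b i T \<Longrightarrow> ConV i T \<in> GC_V n m e b"
  unfolding GC_V_def by auto

lemma perfect_sat:
  fixes \<pi> :: "vtx \<Rightarrow> vtx"
  assumes uniform: "\<forall>i<m. e i \<subseteq> {..<n} \<and> card (e i) = 3"
    and inj: "inj_on \<pi> (GC_V n m e b)"
    and im: "i < m"
    and clq: "\<And>T T'. T \<in> Sset (e i) (b i) \<Longrightarrow> T' \<in> Sset (e i) (b i) \<Longrightarrow> T \<noteq> T' \<Longrightarrow>
               {\<pi> (ConV i T), \<pi> (ConV i T')} \<in> GC_E n m e (\<lambda>_. False)"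
    and inc: "\<And>T j. T \<in> Sset (e i) (b i) \<Longrightarrow> j \<in> e i \<Longrightarrow>
               {\<pi> (ConV i T), \<pi> (VarV j (j \<in> T))} \<in> GC_E n m e (\<lambda>_. False)"
  shows "xor_sat e b (\<lambda>j. case \<pi> (VarV j False) of VarV _ w \<Rightarrow> w | ConV _ _ \<Rightarrow> False) i"
proof -
  define S where "S = Sset (e i) (b i)"
  define E2 where "E2 = GC_E n m e (\<lambda>_. False)"
  define V1 where "V1 = GC_V n m e b"
  have ei: "e i \<subseteq> {..<n}" "card (e i) = 3" using uniform im by auto
  have finei: "finite (e i)" using ei(2) card.infinite by fastforce
  have cardS: "card S = 4" unfolding S_def using Sset_card[OF ei(2)] .
  have finS: "finite S" unfolding S_def using Sset_fin[OF finei] .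
  have SV: "ConV i T \<in> V1" if "T \<in> S" for T
    using ConV_in_V[OF im] that unfolding S_def V1_def local_sat_Sset by auto
  have VV: "VarV j v \<in> V1" if "j \<in> e i" for j v
    using VarV_in_V ei(1) that unfolding V1_def by auto
  have injV: "\<pi> u = \<pi> w \<Longrightarrow> u \<in> V1 \<Longrightarrow> w \<in> V1 \<Longrightarrow> u = w" for u w
    using inj unfolding V1_def inj_on_def by blast
  have eine: "e i \<noteq> {}" using ei(2) by auto
  have step1: "\<exists>k U. \<pi> (ConV i T) = ConV k U" if T1: "T \<in> S" for T
  proof (rule ccontr)
    assume "\<not> ?thesis"
    then obtain x v where xv: "\<pi> (ConV i T) = VarV x v" by (cases "\<pi> (ConV i T)") auto
    define R where "R = (\<lambda>T'. \<pi> (ConV i T')) ` (S - {T})"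
    have cR: "card R = 3"
    proof -
      have "inj_on (\<lambda>T'. \<pi> (ConV i T')) (S - {T})"
        using injV SV unfolding inj_on_def by blast
      then have "card R = card (S - {T})" unfolding R_def by (rule card_image)
      also have "\<dots> = 3" using cardS T1 finS by (simp add: card_Diff_singleton)
      finally show ?thesis .
    qed
    have finR: "finite R" unfolding R_def using finS by auto
    have adj1: "{VarV x v, q} \<in> E2" if "q \<in> R" for q
    proof -
      obtain T' where "T' \<in> S" "T' \<noteq> T" "q = \<pi> (ConV i T')" using \<open>q \<in> R\<close> unfolding R_def by auto
      then show ?thesis using clq[of T T'] T1 xv unfolding S_def E2_def by auto
    qed
    have adj2: "{q1, q2} \<in> E2" if "q1 \<in> R" "q2 \<in> R" "q1 \<noteq> q2" for q1 q2
    proof -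
      obtain T1' where "T1' \<in> S" "q1 = \<pi> (ConV i T1')" using \<open>q1 \<in> R\<close> unfolding R_def by auto
      moreover obtain T2' where "T2' \<in> S" "q2 = \<pi> (ConV i T2')" using \<open>q2 \<in> R\<close> unfolding R_def by auto
      ultimately show ?thesis using clq[of T1' T2'] that(3) unfolding S_def E2_def by auto
    qed
    have notx: "q \<noteq> VarV x v" if "q \<in> R" for q
    proof
      assume "q = VarV x v"
      obtain T' where "T' \<in> S" "T' \<noteq> T" "q = \<pi> (ConV i T')" using \<open>q \<in> R\<close> unfolding R_def by auto
      then show False using injV[of "ConV i T'" "ConV i T"] SV T1 xv \<open>q = VarV x v\<close> by auto
    qed
    show False
    proof (cases "VarV x (\<not> v) \<in> R")
      case True
      have "card (R - {VarV x (\<not> v)}) = 2" using True cR finR by (simp add: card_Diff_singleton)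
      then have "R - {VarV x (\<not> v)} \<noteq> {}" by (metis card.empty zero_neq_numeral)
      then obtain q where q: "q \<in> R" "q \<noteq> VarV x (\<not> v)" by blast
      from adjV[OF adj1[OF q(1), unfolded E2_def]] q(2)
      obtain k U where kU: "q = ConV k U" "v = (x \<in> U)" by auto
      from adjV[OF adj2[OF True q(1), unfolded E2_def]] notx[OF q(1)] q(2)
      obtain k' U' where "q = ConV k' U'" "(\<not> v) = (x \<in> U')" by auto
      then show False using kU by auto
    next
      case False
      have qform: "\<exists>k U. q = ConV k U \<and> k < m \<and> U \<in> Sset (e k) False \<and> x \<in> e k \<and> v = (x \<in> U)"
        if "q \<in> R" for q
        using adjV[OF adj1[OF that, unfolded E2_def]] False that unfolding local_sat_Sset by auto
      have "R \<noteq> {}" using cR by (metis card.empty zero_neq_numeral)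
      then obtain q0 where q0: "q0 \<in> R" by blast
      obtain k U0 where kU0: "q0 = ConV k U0" "k < m" "x \<in> e k" using qform[OF q0] by auto
      have "R \<subseteq> (\<lambda>U. ConV k U) ` {U \<in> Sset (e k) False. (x \<in> U) = v}"
      proof
        fix q assume q: "q \<in> R"
        obtain k' U where kU: "q = ConV k' U" "k' < m" "v = (x \<in> U)"
          "U \<in> Sset (e k') False"
          using qform[OF q] by auto
        have "k' = k"
        proof (cases "q = q0")
          case True then show ?thesis using kU kU0 by simp
        next
          case False
          then show ?thesis using adjC[OF adj2[OF q0 q, unfolded E2_def kU0(1)]] kU(1) False[symmetric] by auto
        qed
        then show "q \<in> (\<lambda>U. ConV k U) ` {U \<in> Sset (e k) False. (x \<in> U) = v}" using kU by auto
      qed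
      moreover have finX: "finite {U \<in> Sset (e k) False. (x \<in> U) = v}"
        using Sset_fin[of "e k" False] uniform kU0(2) card.infinite[of "e k"] by fastforce
      ultimately have "card R \<le> card ((\<lambda>U. ConV k U) ` {U \<in> Sset (e k) False. (x \<in> U) = v})"
        by (intro card_mono) auto
      also have "\<dots> \<le> card {U \<in> Sset (e k) False. (x \<in> U) = v}" by (rule card_image_le[OF finX])
      also have "\<dots> = 2" using Sset_N[of "e k" x False v] uniform kU0 by auto
      finally show False using cR by simp
    qed
  qed
  obtain T0 where T0: "T0 \<in> S" using cardS by (metis card.empty all_not_in_conv zero_neq_numeral)
  obtain k U0 where kU0: "\<pi> (ConV i T0) = ConV k U0" using step1[OF T0] by blast
  define f where "f T = (case \<pi> (ConV i T) of ConV _ U \<Rightarrow> U | VarV _ _ \<Rightarrow> {})" for T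
  have fT: "\<pi> (ConV i T) = ConV k (f T)" if T: "T \<in> S" for T
  proof -
    obtain k' U where kU: "\<pi> (ConV i T) = ConV k' U" using step1[OF T] by blast
    have "k' = k"
    proof (cases "T = T0")
      case True then show ?thesis using kU kU0 by simp
    next
      case False
      have "{ConV k U0, ConV k' U} \<in> E2" using clq[of T0 T] T0 T False kU kU0 unfolding S_def E2_def by auto
      then show ?thesis using adjC[of k U0 "ConV k' U"] unfolding E2_def by auto
    qed
    then show ?thesis using kU unfolding f_def by simp
  qed
  obtain j0 where j0: "j0 \<in> e i" using eine by blast
  have km: "k < m" and fP: "f T \<in> Sset (e k) False" if "T \<in> S" for T
  proof -
    have "{ConV k (f T), \<pi> (VarV j0 (j0 \<in> T))} \<in> E2" using inc[of T j0] that j0 fT[OF that]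
      unfolding S_def E2_def by auto
    then show "k < m" "f T \<in> Sset (e k) False" using adjC unfolding E2_def local_sat_Sset by blast+
  qed
  have km': "k < m" using km[OF T0] .
  have ek: "e k \<subseteq> {..<n}" "card (e k) = 3" using uniform km' by auto
  have finek: "finite (e k)" using ek(2) card.infinite by fastforce
  define P where "P = Sset (e k) False"
  have injf: "inj_on f S"
  proof
    fix T T' assume "T \<in> S" "T' \<in> S" "f T = f T'"
    then have "\<pi> (ConV i T) = \<pi> (ConV i T')" using fT by simp
    then show "T = T'" using injV SV \<open>T \<in> S\<close> \<open>T' \<in> S\<close> by blast
  qed
  have fS: "f ` S = P"
  proof (rule card_subset_eq)
    show "finite P" unfolding P_def using Sset_fin[OF finek] .
    show "f ` S \<subseteq> P" using fP unfolding P_def by auto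
    show "card (f ` S) = card P" using card_image[OF injf] cardS Sset_card[OF ek(2)] unfolding P_def by simp
  qed
  define sg where "sg j v = (case \<pi> (VarV j v) of VarV s _ \<Rightarrow> s | ConV _ _ \<Rightarrow> 0)" for j v
  define tv where "tv j v = (case \<pi> (VarV j v) of VarV _ t \<Rightarrow> t | ConV _ _ \<Rightarrow> False)" for j v
  have step3: "\<pi> (VarV j v) = VarV (sg j v) (tv j v) \<and> sg j v \<in> e k \<and> (sg j v \<in> f T) = tv j v"
    if j: "j \<in> e i" and T: "T \<in> S" and v: "(j \<in> T) = v" for j v T
  proof -
    have "{ConV k (f T), \<pi> (VarV j v)} \<in> E2" using inc[of T j] j T v fT[OF T] unfolding S_def E2_def by auto
    from adjC[OF this[unfolded E2_def]]
    have "(\<exists>T'. \<pi> (VarV j v) = ConV k T' \<and> local_sat e (\<lambda>_. False) k T') \<or>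
          (\<exists>x. \<pi> (VarV j v) = VarV x (x \<in> f T) \<and> x \<in> e k)" by blast
    then show ?thesis
    proof
      assume "\<exists>T'. \<pi> (VarV j v) = ConV k T' \<and> local_sat e (\<lambda>_. False) k T'"
      then obtain T' where T': "\<pi> (VarV j v) = ConV k T'" "T' \<in> P" unfolding P_def local_sat_Sset by auto
      then obtain T'' where "T'' \<in> S" "T' = f T''" using fS by auto
      then have "\<pi> (VarV j v) = \<pi> (ConV i T'')" using T' fT by simp
      then have "VarV j v = ConV i T''" using injV VV[OF j] SV[OF \<open>T'' \<in> S\<close>] by blast
      then show ?thesis by simp
    next
      assume "\<exists>x. \<pi> (VarV j v) = VarV x (x \<in> f T) \<and> x \<in> e k"
      then obtain x where "\<pi> (VarV j v) = VarV x (x \<in> f T)" "x \<in> e k" by blast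
      then show ?thesis unfolding sg_def tv_def by simp
    qed
  qed
  define N where "N j v = {T \<in> S. (j \<in> T) = v}" for j v
  define M where "M s t = {U \<in> P. (s \<in> U) = t}" for s t
  have NM: "f ` N j v = M (sg j v) (tv j v)" if j: "j \<in> e i" for j v
  proof -
    have cN: "card (N j v) = 2" unfolding N_def S_def using Sset_N[OF ei(2) j] .
    then obtain T where T: "T \<in> N j v" by (metis card.empty all_not_in_conv zero_neq_numeral)
    have st: "sg j v \<in> e k" using step3[OF j _ _] T unfolding N_def by auto
    show ?thesis
    proof (rule card_subset_eq)
      show "finite (M (sg j v) (tv j v))" unfolding M_def P_def using Sset_fin[OF finek] by auto
      show "f ` N j v \<subseteq> M (sg j v) (tv j v)"
        using step3[OF j] fP unfolding N_def M_def P_def by auto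
      have "card (f ` N j v) = card (N j v)"
        by (rule card_image) (rule inj_on_subset[OF injf], auto simp: N_def)
      also have "\<dots> = card (M (sg j v) (tv j v))" using cN Sset_N[OF ek(2) st] unfolding M_def P_def by simp
      finally show "card (f ` N j v) = card (M (sg j v) (tv j v))" .
    qed
  qed
  have flip: "sg j True = sg j False \<and> tv j True = (\<not> tv j False)" if j: "j \<in> e i" for j
  proof -
    have st: "sg j v \<in> e k" for v
    proof -
      have "card (N j v) = 2" unfolding N_def S_def using Sset_N[OF ei(2) j] .
      then obtain T where T: "T \<in> N j v" by (metis card.empty all_not_in_conv zero_neq_numeral)
      then show ?thesis using step3[OF j] unfolding N_def by auto
    qed
    have "N j True = S - N j False" unfolding N_def by auto
    then have "f ` N j True = f ` S - f ` N j False"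
      by (simp add: inj_on_image_set_diff[OF injf] N_def)
    then have "M (sg j True) (tv j True) = P - M (sg j False) (tv j False)"
      using NM[OF j] fS by simp
    also have "\<dots> = M (sg j False) (\<not> tv j False)" unfolding M_def by auto
    finally show ?thesis using Sset_M[OF ek(2) st[of True] st[of False]] unfolding M_def P_def by blast
  qed
  define a where "a = (\<lambda>j. case \<pi> (VarV j False) of VarV _ w \<Rightarrow> w | ConV _ _ \<Rightarrow> False)"
  have a_tv: "a j = tv j False" for j unfolding a_def tv_def by simp
  define g where "g j = sg j False" for j
  have gsg: "sg j v = g j" if "j \<in> e i" for j v
    using flip[OF that] unfolding g_def by (cases v) auto
  have gmem: "(g j \<in> f T0) = ((j \<in> T0) \<noteq> a j)" and gek: "g j \<in> e k"
    and gpi: "\<pi> (VarV j (j \<in> T0)) = VarV (g j) (g j \<in> f T0)" if j: "j \<in> e i" for j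
  proof -
    have s3: "\<pi> (VarV j (j \<in> T0)) = VarV (sg j (j \<in> T0)) (tv j (j \<in> T0)) \<and> sg j (j \<in> T0) \<in> e k \<and>
       (sg j (j \<in> T0) \<in> f T0) = tv j (j \<in> T0)" using step3[OF j T0 refl] .
    then show "(g j \<in> f T0) = ((j \<in> T0) \<noteq> a j)"
      using flip[OF j] gsg[OF j] a_tv by (cases "j \<in> T0") auto
    show "g j \<in> e k" using s3 gsg[OF j] by simp
    show "\<pi> (VarV j (j \<in> T0)) = VarV (g j) (g j \<in> f T0)" using s3 gsg[OF j] by simp
  qed
  have injg: "inj_on g (e i)"
  proof
    fix j j' assume jj: "j \<in> e i" "j' \<in> e i" "g j = g j'"
    then have "\<pi> (VarV j (j \<in> T0)) = \<pi> (VarV j' (j' \<in> T0))" using gpi by simp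
    then have "VarV j (j \<in> T0) = VarV j' (j' \<in> T0)" using injV VV jj by blast
    then show "j = j'" by simp
  qed
  have gimg: "g ` e i = e k"
  proof (rule card_subset_eq[OF finek])
    show "g ` e i \<subseteq> e k" using gek by auto
    show "card (g ` e i) = card (e k)" using card_image[OF injg] ei(2) ek(2) by simp
  qed
  define A' where "A' = {j \<in> e i. (j \<in> T0) \<noteq> a j}"
  have fT0: "f T0 = g ` A'"
  proof
    show "f T0 \<subseteq> g ` A'"
    proof
      fix u assume u: "u \<in> f T0"
      have "f T0 \<subseteq> e k" using fP[OF T0] unfolding Sset_def by auto
      then obtain j where "j \<in> e i" "u = g j" using u gimg by auto
      then show "u \<in> g ` A'" using u gmem unfolding A'_def by auto
    qed
    show "g ` A' \<subseteq> f T0" using gmem unfolding A'_def by auto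
  qed
  have "card (f T0) = card A'" unfolding fT0
    by (rule card_image, rule inj_on_subset[OF injg]) (auto simp: A'_def)
  moreover have "even (card (f T0))" using fP[OF T0] unfolding Sset_def by auto
  moreover have "T0 \<subseteq> e i" "odd (card T0) \<longleftrightarrow> b i" using T0 unfolding S_def Sset_def by auto
  ultimately have "odd (card {j \<in> e i. a j}) \<longleftrightarrow> b i"
    using parity_lemma[OF finei, of T0 a] unfolding A'_def by auto
  then show ?thesis unfolding xor_sat_def a_def .
qed



lemma GC_V_fin: assumes "\<forall>i<m. e i \<subseteq> {..<n} \<and> card (e i) = 3" shows "finite (GC_V n m e b)"
proof -
  have "GC_V n m e b \<subseteq> (\<lambda>(x,v). VarV x v) ` ({..<n} \<times> UNIV) \<union> (\<lambda>(i,T). ConV i T) ` (SIGMA i:{..<m}. Pow (e i))"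
    unfolding GC_V_def local_sat_def by auto
  moreover have "finite (e i)" if "i < m" for i using assms that card.infinite by fastforce
  ultimately have "finite ((\<lambda>(x,v). VarV x v) ` ({..<n} \<times> UNIV) \<union> (\<lambda>(i,T). ConV i T) ` (SIGMA i:{..<m}. Pow (e i)))"
    by (intro finite_UnI finite_imageI finite_SigmaI) auto
  with \<open>GC_V n m e b \<subseteq> _\<close> show ?thesis by (rule finite_subset)
qed

lemma GC_E_card: assumes U: "\<forall>i<m. e i \<subseteq> {..<n} \<and> card (e i) = 3"
  shows "finite (GC_E n m e b) \<and> card (GC_E n m e b) \<le> n + 18 * m"
proof -
  define A where "A = {{VarV x False, VarV x True} | x. x < n}"
  define B where "B i = {{ConV i T, ConV i T'} | T T'. local_sat e b i T \<and> local_sat e b i T' \<and> T \<noteq> T'}" for i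
  define C where "C i = (\<lambda>(T,j). {ConV i T, VarV j (j \<in> T)}) ` (Sset (e i) (b i) \<times> e i)" for i
  have E: "GC_E n m e b = A \<union> (\<Union>i<m. B i) \<union> (\<Union>i<m. C i)"
  proof -
    have 1: "{{ConV i T, ConV i T'} | i T T'. i < m \<and> local_sat e b i T \<and> local_sat e b i T' \<and> T \<noteq> T'}
       = (\<Union>i<m. B i)" unfolding B_def by blast
    have 2: "{{ConV i T, VarV j (j \<in> T)} | i T j. i < m \<and> local_sat e b i T \<and> j \<in> e i} = (\<Union>i<m. C i)"
      unfolding C_def local_sat_Sset by fast
    show ?thesis unfolding GC_E_def A_def 1 2 ..
  qed
  have fe: "finite (e i)" if "i < m" for i using U that card.infinite by fastforce
  have A: "finite A \<and> card A \<le> n"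
  proof -
    have "A = (\<lambda>x. {VarV x False, VarV x True}) ` {..<n}" unfolding A_def by auto
    then show ?thesis using card_image_le[of "{..<n}"] by auto
  qed
  have B: "finite (B i) \<and> card (B i) \<le> 6" if i: "i < m" for i
  proof -
    have fS: "finite (ConV i ` Sset (e i) (b i))" using Sset_fin fe[OF i] by auto
    have cS: "card (ConV i ` Sset (e i) (b i)) = 4"
      using card_image[of "ConV i" "Sset (e i) (b i)"] Sset_card U i by (simp add: inj_on_def)
    have sub: "B i \<subseteq> {X. X \<subseteq> ConV i ` Sset (e i) (b i) \<and> card X = 2}"
    proof
      fix X assume "X \<in> B i"
      then obtain T T' where "X = {ConV i T, ConV i T'}" "T \<in> Sset (e i) (b i)" "T' \<in> Sset (e i) (b i)" "T \<noteq> T'"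
        unfolding B_def local_sat_Sset by auto
      then show "X \<in> {X. X \<subseteq> ConV i ` Sset (e i) (b i) \<and> card X = 2}" by simp
    qed
    have "finite {X. X \<subseteq> ConV i ` Sset (e i) (b i) \<and> card X = 2}" using fS by auto
    moreover have "card {X. X \<subseteq> ConV i ` Sset (e i) (b i) \<and> card X = 2} = 6"
      using n_subsets[OF fS, of 2] cS by (simp add: numeral_eq_Suc)
    ultimately show ?thesis using sub card_mono[of _ "B i"] finite_subset[of "B i"] by metis
  qed
  have C: "finite (C i) \<and> card (C i) \<le> 12" if i: "i < m" for i
  proof -
    have f: "finite (Sset (e i) (b i) \<times> e i)" using Sset_fin fe[OF i] by auto
    have "card (C i) \<le> card (Sset (e i) (b i) \<times> e i)" unfolding C_def by (rule card_image_le[OF f])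
    also have "\<dots> = 12" using Sset_card U i by (simp add: card_cartesian_product)
    finally show ?thesis unfolding C_def using f by auto
  qed
  have fB: "finite (\<Union>i<m. B i)" and fC: "finite (\<Union>i<m. C i)" using B C by auto
  have cB: "card (\<Union>i<m. B i) \<le> 6 * m"
  proof -
    have "card (\<Union>i<m. B i) \<le> (\<Sum>i<m. card (B i))" by (rule card_UN_le) simp
    also have "\<dots> \<le> (\<Sum>i<m. 6)" by (rule sum_mono) (use B in auto)
    finally show ?thesis by simp
  qed
  have cC: "card (\<Union>i<m. C i) \<le> 12 * m"
  proof -
    have "card (\<Union>i<m. C i) \<le> (\<Sum>i<m. card (C i))" by (rule card_UN_le) simp
    also have "\<dots> \<le> (\<Sum>i<m. 12)" by (rule sum_mono) (use C in auto)
    finally show ?thesis by simp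
  qed
  have "card (GC_E n m e b) \<le> card A + card (\<Union>i<m. B i) + card (\<Union>i<m. C i)"
    unfolding E by (meson card_Un_le le_trans add_le_mono order_refl)
  then show ?thesis unfolding E using A fB fC cB cC by auto
qed


definition flipv :: "(nat \<Rightarrow> nat set) \<Rightarrow> (nat \<Rightarrow> bool) \<Rightarrow> vtx \<Rightarrow> vtx" where
  "flipv e b u = (case u of VarV x v \<Rightarrow> VarV x v
     | ConV i T \<Rightarrow> ConV i (if b i then (if (SOME x. x \<in> e i) \<in> T then T - {SOME x. x \<in> e i}
                                         else insert (SOME x. x \<in> e i) T) else T))"

lemma flipv_invol: "flipv e b (flipv e b u) = u"
  unfolding flipv_def by (cases u) auto

lemma flipv_maps:
  assumes U: "\<forall>i<m. e i \<subseteq> {..<n} \<and> card (e i) = 3"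
    and u: "u \<in> GC_V n m e b1" and b2: "\<And>i. b2 i = (b1 i \<noteq> b i)"
  shows "flipv e b u \<in> GC_V n m e b2"
proof (cases u)
  case (VarV x v) then show ?thesis using u unfolding GC_V_def flipv_def by auto
next
  case (ConV i T)
  then have i: "i < m" and T: "T \<subseteq> e i" "odd (card T) \<longleftrightarrow> b1 i"
    using u unfolding GC_V_def local_sat_def by auto
  define r where "r = (SOME x. x \<in> e i)"
  have "e i \<noteq> {}" using U i by auto
  then have r: "r \<in> e i" unfolding r_def by (simp add: some_in_eq)
  have fT: "finite T" using T(1) U i card.infinite finite_subset by fastforce
  define T' where "T' = (if b i then (if r \<in> T then T - {r} else insert r T) else T)"
  have "T' \<subseteq> e i" using T r unfolding T'_def by auto
  moreover have "odd (card T') \<longleftrightarrow> b2 i"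
  proof (cases "b i")
    case True
    show ?thesis
    proof (cases "r \<in> T")
      case True
      then have "card T' = card T - 1" "card T \<ge> 1" using \<open>b i\<close> fT unfolding T'_def
        by (auto simp: card_Diff_singleton Suc_le_eq card_gt_0_iff)
      then show ?thesis using T(2) b2[of i] \<open>b i\<close> by auto
    next
      case False
      then have "card T' = card T + 1" using \<open>b i\<close> fT unfolding T'_def by auto
      then show ?thesis using T(2) b2[of i] \<open>b i\<close> by auto
    qed
  next
    case False then show ?thesis using T(2) b2[of i] unfolding T'_def by auto
  qed
  moreover have "flipv e b u = ConV i T'" unfolding ConV flipv_def T'_def r_def by simp
  ultimately show ?thesis using i unfolding GC_V_def local_sat_def by auto
qed

lemma exists_bij:
  assumes U: "\<forall>i<m. e i \<subseteq> {..<n} \<and> card (e i) = 3"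
  shows "\<exists>\<pi>. \<pi> \<in> GC_V n m e b \<rightarrow>\<^sub>E GC_V n m e (\<lambda>_. False) \<and> bij_betw \<pi> (GC_V n m e b) (GC_V n m e (\<lambda>_. False))"
proof -
  have "bij_betw (flipv e b) (GC_V n m e b) (GC_V n m e (\<lambda>_. False))"
    by (rule bij_betw_byWitness[where f' = "flipv e b"])
      (auto simp: flipv_invol intro!: flipv_maps[OF U])
  then show ?thesis
    by (intro exI[of _ "restrict (flipv e b) (GC_V n m e b)"]) (auto simp: bij_betw_def)
qed


lemma cycle_no_fix:
  assumes "distinct cs" "length cs \<ge> 2" "x \<in> set cs"
  shows "cycle_of_list cs x \<noteq> x"
proof
  assume fx: "cycle_of_list cs x = x"
  obtain k where k: "k < length cs" "cs ! k = x" using assms(3) by (metis in_set_conv_nth)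
  have "map (cycle_of_list cs ^^ 1) cs = rotate 1 cs" by (rule cyclic_rotation[OF assms(1)])
  then have "map (cycle_of_list cs) cs = rotate1 cs" by simp
  then have "cycle_of_list cs (cs ! k) = rotate1 cs ! k" using k(1) by (metis nth_map length_rotate1)
  also have "\<dots> = cs ! (Suc k mod length cs)" using k(1) by (rule nth_rotate1)
  finally have "cs ! (Suc k mod length cs) = cs ! k" using fx k(2) by simp
  moreover have "Suc k mod length cs < length cs" using k(1) by (intro mod_less_divisor) auto
  ultimately have "Suc k mod length cs = k" using nth_eq_iff_index_eq[OF assms(1), of "Suc k mod length cs" k] k(1) by simp
  then show False
  proof (cases "Suc k < length cs")
    case True
    then show False using \<open>Suc k mod length cs = k\<close> by simp
  next
    case False
    then have "Suc k = length cs" using k(1) by simp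
    then show False using \<open>Suc k mod length cs = k\<close> assms(2) by simp
  qed
qed

lemma small_c_contra:
  assumes U: "\<forall>i<m. e i \<subseteq> {..<n} \<and> card (e i) = 3"
    and mpos: "0 < m"
    and asym: "asymmetric {..<n} (e ` {..<m}) \<beta> \<gamma>"
    and gpos: "0 < \<gamma>" and bsmall: "\<beta> < 0.009"
    and small: "33 * m \<le> n"
  shows False
proof -
  define Uc where "Uc = (\<Union>i<m. e i)"
  have fe: "finite (e i)" if "i < m" for i using U that card.infinite by fastforce
  have cU: "card Uc \<le> 3 * m"
  proof -
    have "card Uc \<le> (\<Sum>i<m. card (e i))" unfolding Uc_def by (rule card_UN_le) simp
    also have "\<dots> = (\<Sum>i<m. 3)" using U by (intro sum.cong) auto
    finally show ?thesis by simp
  qed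
  have Usub: "Uc \<subseteq> {..<n}" using U unfolding Uc_def by auto
  define I where "I = {..<n} - Uc"
  have cI: "card I = n - card Uc" unfolding I_def using Usub by (simp add: card_Diff_subset finite_subset)
  have n3: "n \<ge> 3"
  proof -
    have "card (e 0) \<le> card {..<n}" using U mpos by (intro card_mono) auto
    moreover have "card (e 0) = 3" using U mpos by blast
    ultimately show ?thesis by simp
  qed
  have cI2: "card I \<ge> 2" using cI cU small n3 by linarith
  obtain cs where cs: "set cs = I" "distinct cs" using finite_distinct_list[of I] unfolding I_def by auto
  have lcs: "length cs \<ge> 2" using distinct_card[OF cs(2)] cs(1) cI2 by simp
  define p where "p = cycle_of_list cs"
  have pI: "p permutes I" unfolding p_def using cycle_permutes[of cs] cs(1) by simp
  have pn: "p permutes {..<n}" by (rule permutes_subset[OF pI]) (simp add: I_def)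
  have fixsub: "{x \<in> {..<n}. p x = x} \<subseteq> Uc"
  proof
    fix x assume x: "x \<in> {x \<in> {..<n}. p x = x}"
    show "x \<in> Uc"
    proof (rule ccontr)
      assume "x \<notin> Uc"
      then have "x \<in> set cs" using x cs(1) unfolding I_def by simp
      then show False using cycle_no_fix[OF cs(2) lcs] x unfolding p_def by simp
    qed
  qed
  have "card {x \<in> {..<n}. p x = x} \<le> card Uc"
    by (rule card_mono[OF finite_subset[OF Usub] fixsub]) simp
  then have r1: "real (card {x \<in> {..<n}. p x = x}) \<le> 3 * real m" using cU by linarith
  have r2: "33 * real m \<le> real n" using small by linarith
  have r3: "\<beta> * real n \<le> 0.009 * real n" using bsmall by (intro mult_right_mono) auto
  have "real (card {x \<in> {..<n}. p x = x}) \<le> (1 - \<beta>) * real n"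
    using r1 r2 r3 by (simp add: algebra_simps)
  with asym pn have A: "AUT (e ` {..<m}) p < 1 - \<gamma>" unfolding asymmetric_def card_lessThan by blast
  have fix_ed: "p ` ed = ed" if "ed \<in> e ` {..<m}" for ed
  proof -
    have "ed \<subseteq> Uc" using that unfolding Uc_def by blast
    then have "p x = x" if "x \<in> ed" for x
      using id_outside_supp[of x cs] cs(1) that unfolding p_def I_def by blast
    then show ?thesis by (simp add: image_cong)
  qed
  have pe: "p ` ed \<in> e ` {..<m}" if "ed \<in> e ` {..<m}" for ed using fix_ed[OF that] that by simp
  have "{ed \<in> e ` {..<m}. p ` ed \<in> e ` {..<m}} = e ` {..<m}" using pe by blast
  moreover have "card (e ` {..<m}) > 0" using mpos by (auto simp: card_gt_0_iff)
  ultimately have "AUT (e ` {..<m}) p = 1" unfolding AUT_def using mpos by auto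
  then show False using A gpos by simp
qed



lemma final_arith:
  fixes m n :: nat and c \<epsilon> \<beta> \<delta> X :: real
  assumes "0 < m" "0 < n" "real m = c * real n" "0 < \<epsilon>" "0 < \<beta>"
    and "\<delta> \<le> 1/200" "\<delta> \<le> \<epsilon> / (95 * c)" "0 \<le> \<delta>"
    and "n < 33 * m"
    and "X \<ge> 1 - \<delta> * (real n + 18 * real m) / real m"
  shows "X \<ge> 0.9 - 100 * (\<epsilon> + \<beta>)"
proof -
  have mp: "real m > 0" using assms by simp
  have np: "real n > 0" using assms by simp
  have cpos: "c > 0" using assms(3) mp np by (metis mult_pos_pos zero_less_mult_pos2 mult.commute)
  have c33: "33 * c > 1"
  proof -
    have "real n < 33 * (c * real n)" using assms(9) assms(3) by (metis of_nat_less_iff of_nat_mult of_nat_numeral)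
    then show ?thesis using np by (simp add: algebra_simps)
  qed
  have "\<delta> * real n \<le> \<epsilon> / (95 * c) * real n" using assms(7) np by (intro mult_right_mono) auto
  also have "\<dots> \<le> 100 * \<epsilon> * real m"
  proof -
    have "c * c \<ge> (1/33) * (1/33)" using c33 by (intro mult_mono) auto
    then have cc: "9500 * c * c \<ge> 1" by simp
    have "1 * real n \<le> (9500 * c * c) * real n" using np cc by (intro mult_right_mono) auto
    then have "real n \<le> 9500 * c * (c * real n)" by (simp add: algebra_simps)
    then have "real n \<le> 9500 * c * real m" using assms(3) by simp
    then have "\<epsilon> * real n \<le> \<epsilon> * (9500 * c * real m)" using assms(4) by (intro mult_left_mono) auto
    then show ?thesis using cpos by (simp add: field_simps)
  qed
  finally have d1: "\<delta> * real n \<le> 100 * \<epsilon> * real m" .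
  have "\<delta> * (18 * real m) \<le> (1/200) * (18 * real m)" using assms(6) mp by (intro mult_right_mono) auto
  then have d2: "\<delta> * (18 * real m) \<le> (9/100) * real m" by simp
  have "\<delta> * (real n + 18 * real m) \<le> (100 * \<epsilon> + (9/100)) * real m"
    using d1 d2 by (simp only: distrib_left distrib_right)
  then have "\<delta> * (real n + 18 * real m) / real m \<le> 100 * \<epsilon> + (9/100)"
    using mp by (simp add: pos_divide_le_eq)
  then have "0.9 - 100 * (\<epsilon> + \<beta>) \<le> 1 - \<delta> * (real n + 18 * real m) / real m"
    using assms(5) by (simp add: algebra_simps)
  then show ?thesis using assms(10) by linarith
qed


theorem lemma5p2:
  fixes n m :: nat and e :: "nat \<Rightarrow> nat set" and b :: "nat \<Rightarrow> bool"
    and c \<epsilon> \<beta> \<gamma> :: real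
  assumes uniform: "\<forall>i<m. e i \<subseteq> {..<n} \<and> card (e i) = 3"
    and distinct_edges: "inj_on e {..<m}"
    and m_pos: "0 < m"
    and m_eq: "real m = c * real n"
    and eps_pos: "0 < \<epsilon>" and beta_pos: "0 < \<beta>" and gamma_pos: "0 < \<gamma>"
    and deg: "degree_bounded {..<n} (e ` {..<m}) \<epsilon> (100 * c)"
    and asym: "asymmetric {..<n} (e ` {..<m}) \<beta> \<gamma>"
    and gamma_ge: "\<gamma> \<ge> 200 * \<epsilon>"
    and GI_ge: "GI (GC_V n m e b) (GC_E n m e b) (GC_V n m e (\<lambda>_. False)) (GC_E n m e (\<lambda>_. False))
                  \<ge> 1 - min (1/200) (min (\<gamma>/48) (\<epsilon> / (95 * c)))"
  shows "xor_val n m e b \<ge> 0.9 - 100 * (\<epsilon> + \<beta>)"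
proof -
  define \<delta> where "\<delta> = min (1/200) (min (\<gamma>/48) (\<epsilon> / (95 * c)))"
  define V1 where "V1 = GC_V n m e b"
  define V2 where "V2 = GC_V n m e (\<lambda>_. False)"
  define E1 where "E1 = GC_E n m e b"
  define E2 where "E2 = GC_E n m e (\<lambda>_. False)"
  have n3: "n \<ge> 3"
  proof -
    have "card (e 0) \<le> card {..<n}" using uniform m_pos by (intro card_mono) auto
    moreover have "card (e 0) = 3" using uniform m_pos by blast
    ultimately show ?thesis by simp
  qed
  have cpos: "c > 0"
  proof -
    have "real m > 0" "real n > 0" using m_pos n3 by auto
    then show ?thesis using m_eq by (metis zero_less_mult_pos2)
  qed
  have dpos: "0 \<le> \<delta>" unfolding \<delta>_def using eps_pos gamma_pos cpos by auto
  have d1: "\<delta> \<le> 1/200" "\<delta> \<le> \<epsilon> / (95 * c)" unfolding \<delta>_def by auto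
  have fV1: "finite V1" "finite V2" unfolding V1_def V2_def using GC_V_fin[OF uniform] by auto
  have E1c: "finite E1" "card E1 \<le> n + 18 * m" unfolding E1_def using GC_E_card[OF uniform] by auto
  have E2c: "finite E2" "card E2 \<le> n + 18 * m" unfolding E2_def using GC_E_card[OF uniform] by auto
  define Bs where "Bs = {\<pi> \<in> V1 \<rightarrow>\<^sub>E V2. bij_betw \<pi> V1 V2}"
  define F where "F \<pi> = real (card {ed \<in> E1. \<pi> ` ed \<in> E2}) / real (max (card E1) (card E2))" for \<pi>
  have finB: "finite Bs" unfolding Bs_def using finite_PiE[OF fV1(1), of "\<lambda>_. V2"] fV1(2) by auto
  have neB: "Bs \<noteq> {}" using exists_bij[OF uniform, of b] unfolding Bs_def V1_def V2_def by auto
  have "1 - \<delta> \<le> Max (F ` Bs)" using GI_ge unfolding GI_def F_def Bs_def \<delta>_def V1_def V2_def E1_def E2_def .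
  then obtain \<pi> where \<pi>B: "\<pi> \<in> Bs" and Fp: "1 - \<delta> \<le> F \<pi>"
    using Max_ge_iff[of "F ` Bs" "1 - \<delta>"] finB neB by auto
  have injp: "inj_on \<pi> V1" using \<pi>B unfolding Bs_def bij_betw_def by auto
  define Mx where "Mx = max (card E1) (card E2)"
  have Mxpos: "Mx > 0"
  proof (rule ccontr)
    assume "\<not> Mx > 0" then have "Mx = 0" by simp
    then have "F \<pi> = 0" unfolding F_def Mx_def by simp
    then show False using Fp d1 by simp
  qed
  define good where "good = {ed \<in> E1. \<pi> ` ed \<in> E2}"
  define bad where "bad = {ed \<in> E1. \<pi> ` ed \<notin> E2}"
  have fgb: "finite good" "finite bad" using E1c unfolding good_def bad_def by auto
  have cgb: "card good + card bad = card E1"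
  proof -
    have "good \<union> bad = E1" "good \<inter> bad = {}" unfolding good_def bad_def by auto
    then show ?thesis using card_Un_disjoint[OF fgb] by simp
  qed
  have "(1 - \<delta>) * real Mx \<le> real (card good)"
    using Fp Mxpos unfolding F_def good_def Mx_def by (simp add: le_divide_eq)
  moreover have "card E1 \<le> Mx" "Mx \<le> n + 18 * m" unfolding Mx_def using E1c E2c by auto
  ultimately have cbad: "real (card bad) \<le> \<delta> * (real n + 18 * real m)"
    using cgb dpos
  proof -
    assume a: "(1 - \<delta>) * real Mx \<le> real (card good)" "card E1 \<le> Mx" "Mx \<le> n + 18 * m"
    have "real (card bad) = real (card E1) - real (card good)" using cgb by linarith
    also have "\<dots> \<le> real Mx - (1 - \<delta>) * real Mx" using a(1,2) by linarith
    also have "\<dots> = \<delta> * real Mx" by (simp add: algebra_simps)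
    also have "\<dots> \<le> \<delta> * (real n + 18 * real m)" using a(3) dpos by (intro mult_left_mono) auto
    finally show ?thesis .
  qed
  define a where "a = (\<lambda>j. case \<pi> (VarV j False) of VarV _ w \<Rightarrow> w | ConV _ _ \<Rightarrow> False)"
  define perf where "perf i \<longleftrightarrow>
     (\<forall>T T'. T \<in> Sset (e i) (b i) \<longrightarrow> T' \<in> Sset (e i) (b i) \<longrightarrow> T \<noteq> T' \<longrightarrow>
               {\<pi> (ConV i T), \<pi> (ConV i T')} \<in> E2) \<and>
     (\<forall>T j. T \<in> Sset (e i) (b i) \<longrightarrow> j \<in> e i \<longrightarrow> {\<pi> (ConV i T), \<pi> (VarV j (j \<in> T))} \<in> E2)" for i
  have perf_sat: "xor_sat e b a i" if "i < m" "perf i" for i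
    unfolding a_def
    by (rule perfect_sat[OF uniform injp[unfolded V1_def] that(1)])
       (use that(2) in \<open>auto simp: perf_def E2_def\<close>)
  define Q where "Q = {i \<in> {..<m}. \<not> perf i}"
  have Qbad: "\<exists>ed. ed \<in> bad \<and> (\<exists>T. ConV i T \<in> ed)" if "i \<in> Q" for i
  proof -
    have i: "i < m" "\<not> perf i" using that unfolding Q_def by auto
    then consider (a) T T' where "T \<in> Sset (e i) (b i)" "T' \<in> Sset (e i) (b i)" "T \<noteq> T'"
               "{\<pi> (ConV i T), \<pi> (ConV i T')} \<notin> E2"
      | (b) T j where "T \<in> Sset (e i) (b i)" "j \<in> e i" "{\<pi> (ConV i T), \<pi> (VarV j (j \<in> T))} \<notin> E2"
      unfolding perf_def by blast
    then show ?thesis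
    proof cases
      case a
      have "{ConV i T, ConV i T'} \<in> E1" unfolding E1_def GC_E_def local_sat_Sset using a i by blast
      then show ?thesis using a unfolding bad_def by (intro exI[of _ "{ConV i T, ConV i T'}"]) auto
    next
      case b
      have "{ConV i T, VarV j (j \<in> T)} \<in> E1" unfolding E1_def GC_E_def local_sat_Sset using b i by blast
      then show ?thesis using b unfolding bad_def by (intro exI[of _ "{ConV i T, VarV j (j \<in> T)}"]) auto
    qed
  qed
  define h where "h i = (SOME ed. ed \<in> bad \<and> (\<exists>T. ConV i T \<in> ed))" for i
  have hQ: "h i \<in> bad \<and> (\<exists>T. ConV i T \<in> h i)" if "i \<in> Q" for i
    unfolding h_def using someI_ex[OF Qbad[OF that]] .
  have injh: "inj_on h Q"
  proof
    fix i i' assume "i \<in> Q" "i' \<in> Q" "h i = h i'"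
    then obtain T T' where "ConV i T \<in> h i" "ConV i' T' \<in> h i" "h i \<in> E1"
      using hQ unfolding bad_def by fastforce
    then show "i = i'" using edge_con_same unfolding E1_def by blast
  qed
  have cQ: "card Q \<le> card bad"
    by (rule card_inj_on_le[OF injh _ fgb(2)]) (use hQ in auto)
  define Sat where "Sat = {i \<in> {..<m}. xor_sat e b a i}"
  have "{..<m} - Q \<subseteq> Sat" unfolding Sat_def Q_def using perf_sat by auto
  then have "card ({..<m} - Q) \<le> card Sat" by (intro card_mono) (auto simp: Sat_def)
  moreover have "card ({..<m} - Q) = m - card Q" by (subst card_Diff_subset) (auto simp: Q_def)
  ultimately have cSat: "real (card Sat) \<ge> real m - real (card bad)" using cQ by linarith
  define a' where "a' = restrict a {..<n}"
  have a'P: "a' \<in> {..<n} \<rightarrow>\<^sub>E (UNIV :: bool set)" unfolding a'_def by auto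
  have "{i \<in> {..<m}. xor_sat e b a' i} = Sat"
  proof -
    have "xor_sat e b a' i = xor_sat e b a i" if "i < m" for i
    proof -
      have "{j \<in> e i. a' j} = {j \<in> e i. a j}" using uniform that unfolding a'_def by auto
      then show ?thesis unfolding xor_sat_def by simp
    qed
    then show ?thesis unfolding Sat_def by auto
  qed
  then have X: "real (card Sat) / real m \<le> xor_val n m e b"
    unfolding xor_val_def
    by (intro Max_ge finite_imageI finite_PiE) (auto intro!: image_eqI[OF _ a'P])
  have mp: "real m > 0" using m_pos by simp
  have X1: "real (card Sat) / real m \<ge> 1 - \<delta> * (real n + 18 * real m) / real m"
  proof -
    have "real (card Sat) \<ge> real m - \<delta> * (real n + 18 * real m)" using cSat cbad by linarith
    then have "real (card Sat) / real m \<ge> (real m - \<delta> * (real n + 18 * real m)) / real m"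
      using mp by (intro divide_right_mono) auto
    also have "(real m - \<delta> * (real n + 18 * real m)) / real m = 1 - \<delta> * (real n + 18 * real m) / real m"
      using mp by (simp add: diff_divide_distrib)
    finally show ?thesis .
  qed
  show ?thesis
  proof (cases "0.9 - 100 * (\<epsilon> + \<beta>) \<le> 0")
    case True
    have "0 \<le> real (card Sat) / real m" by simp
    then show ?thesis using True X by linarith
  next
    case False
    then have bs: "\<beta> < 0.009" using eps_pos by simp
    show ?thesis
    proof (cases "33 * m \<le> n")
      case True
      then show ?thesis using small_c_contra[OF uniform m_pos asym gamma_pos bs] by simp
    next
      case False
      then have "n < 33 * m" by simp
      have "real (card Sat) / real m \<ge> 0.9 - 100 * (\<epsilon> + \<beta>)"
        by (rule final_arith[OF m_pos _ m_eq eps_pos beta_pos d1 dpos \<open>n < 33 * m\<close> X1]) (use n3 in simp)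
      then show ?thesis using X by linarith
    qed
  qed
qed


end
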